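(* Let the real variables be $c_{11},c_{22},c_{33},c_{44},c_{12},c_{23},c_{34},c_{41},s_{12},s_{23},s_{34},s_{41}$ (collectively $(c,s)$). Define $p_4=(c_{12}c_{34}-s_{12}s_{34})(c_{23}c_{41}-s_{23}s_{41})-(s_{12}c_{34}+c_{12}s_{34})(s_{23}c_{41}+c_{23}s_{41})-c_{11}c_{22}c_{33}c_{44}$, $p_{ij}=c_{ij}^2+s_{ij}^2-c_{ii}c_{jj}$ for $(i,j)\in\{(1,2),(2,3),(3,4),(4,1)\}$, $q_4^1=s_{12}c_{34}+c_{12}s_{34}+s_{23}c_{41}+c_{23}s_{41}$, $q_4^2=c_{12}c_{34}-s_{12}s_{34}-c_{23}c_{41}+s_{23}s_{41}$. Then $\{(c,s):p_4=p_{12}=p_{23}=p_{34}=p_{41}=0\}=\{(c,s):q_4^1=q_4^2=p_{12}=p_{23}=p_{34}=p_{41}=0\}$. *)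

theory Defs
  imports Main "HOL.Real"
begin

definition p4 :: "real \<Rightarrow> real \<Rightarrow> real \<Rightarrow> real \<Rightarrow> real \<Rightarrow> real \<Rightarrow> real \<Rightarrow> real \<Rightarrow> real \<Rightarrow> real \<Rightarrow> real \<Rightarrow> real \<Rightarrow> real" where
  "p4 c11 c22 c33 c44 c12 c23 c34 c41 s12 s23 s34 s41 =
     (c12*c34 - s12*s34)*(c23*c41 - s23*s41) - (s12*c34 + c12*s34)*(s23*c41 + c23*s41)
     - c11*c22*c33*c44"

definition pij :: "real \<Rightarrow> real \<Rightarrow> real \<Rightarrow> real \<Rightarrow> real" where
  "pij cii cjj cij sij = cij^2 + sij^2 - cii*cjj"

definition q41 :: "real \<Rightarrow> real \<Rightarrow> real \<Rightarrow> real \<Rightarrow> real \<Rightarrow> real \<Rightarrow> real \<Rightarrow> real \<Rightarrow> real" where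
  "q41 c12 c23 c34 c41 s12 s23 s34 s41 = s12*c34 + c12*s34 + s23*c41 + c23*s41"

definition q42 :: "real \<Rightarrow> real \<Rightarrow> real \<Rightarrow> real \<Rightarrow> real \<Rightarrow> real \<Rightarrow> real \<Rightarrow> real \<Rightarrow> real" where
  "q42 c12 c23 c34 c41 s12 s23 s34 s41 = c12*c34 - s12*s34 - c23*c41 + s23*s41"

end

theory Submission
  imports Defs
begin

lemma key:
  fixes c11 c22 c33 c44 c12 c23 c34 c41 s12 s23 s34 s41 :: real
  assumes h12: "c12^2 + s12^2 = c11*c22" and h23: "c23^2 + s23^2 = c22*c33"
    and h34: "c34^2 + s34^2 = c33*c44" and h41: "c41^2 + s41^2 = c44*c11"
  shows "((c12*c34 - s12*s34)*(c23*c41 - s23*s41) - (s12*c34 + c12*s34)*(s23*c41 + c23*s41)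
     - c11*c22*c33*c44 = 0) \<longleftrightarrow>
     (s12*c34 + c12*s34 + s23*c41 + c23*s41 = 0 \<and> c12*c34 - s12*s34 - c23*c41 + s23*s41 = 0)"
proof -
  define a1 where "a1 = c12*c34 - s12*s34"
  define a2 where "a2 = s12*c34 + c12*s34"
  define b1 where "b1 = c23*c41 - s23*s41"
  define b2 where "b2 = s23*c41 + c23*s41"
  define P where "P = c11*c22*c33*c44"
  have "a1^2 + a2^2 = (c12^2 + s12^2)*(c34^2+s34^2)"
    unfolding a1_def a2_def by (simp add: power2_eq_square algebra_simps)
  hence A: "a1^2 + a2^2 = P" using h12 h34 unfolding P_def by (simp add: algebra_simps)
  have "b1^2 + b2^2 = (c23^2 + s23^2)*(c41^2+s41^2)"
    unfolding b1_def b2_def by (simp add: power2_eq_square algebra_simps)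
  hence B: "b1^2 + b2^2 = P" using h23 h41 unfolding P_def by (simp add: algebra_simps)
  have E: "(a1-b1)^2 + (a2+b2)^2 = a1^2+a2^2+b1^2+b2^2 - 2*(a1*b1 - a2*b2)"
    by (simp add: power2_eq_square algebra_simps)
  have "(a1*b1 - a2*b2 - P = 0) \<longleftrightarrow> (a2 + b2 = 0 \<and> a1 - b1 = 0)"
  proof
    assume "a1*b1 - a2*b2 - P = 0"
    hence "(a1-b1)^2 + (a2+b2)^2 = 0" using E A B by simp
    thus "a2 + b2 = 0 \<and> a1 - b1 = 0"
      by (simp add: sum_power2_eq_zero_iff)
  next
    assume "a2 + b2 = 0 \<and> a1 - b1 = 0"
    hence "b1 = a1" "b2 = -a2" by auto
    thus "a1*b1 - a2*b2 - P = 0" using A by (simp add: power2_eq_square)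
  qed
  thus ?thesis unfolding a1_def a2_def b1_def b2_def P_def by (simp add: algebra_simps)
qed

theorem proposition6:
  shows "{(c11, c22, c33, c44, c12, c23, c34, c41, s12, s23, s34, s41).
            p4 c11 c22 c33 c44 c12 c23 c34 c41 s12 s23 s34 s41 = 0 \<and>
            pij c11 c22 c12 s12 = 0 \<and> pij c22 c33 c23 s23 = 0 \<and>
            pij c33 c44 c34 s34 = 0 \<and> pij c44 c11 c41 s41 = 0}
       = {(c11, c22, c33, c44, c12, c23, c34, c41, s12, s23, s34, s41).
            q41 c12 c23 c34 c41 s12 s23 s34 s41 = 0 \<and>
            q42 c12 c23 c34 c41 s12 s23 s34 s41 = 0 \<and>
            pij c11 c22 c12 s12 = 0 \<and> pij c22 c33 c23 s23 = 0 \<and>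
            pij c33 c44 c34 s34 = 0 \<and> pij c44 c11 c41 s41 = 0}"
proof -
  have "\<And>c11 c22 c33 c44 c12 c23 c34 c41 s12 s23 s34 s41.
     (p4 c11 c22 c33 c44 c12 c23 c34 c41 s12 s23 s34 s41 = 0 \<and>
            pij c11 c22 c12 s12 = 0 \<and> pij c22 c33 c23 s23 = 0 \<and>
            pij c33 c44 c34 s34 = 0 \<and> pij c44 c11 c41 s41 = 0) =
     (q41 c12 c23 c34 c41 s12 s23 s34 s41 = 0 \<and>
            q42 c12 c23 c34 c41 s12 s23 s34 s41 = 0 \<and>
            pij c11 c22 c12 s12 = 0 \<and> pij c22 c33 c23 s23 = 0 \<and>
            pij c33 c44 c34 s34 = 0 \<and> pij c44 c11 c41 s41 = 0)"
  proof -
    fix c11 c22 c33 c44 c12 c23 c34 c41 s12 s23 s34 s41 :: real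
    show "?thesis c11 c22 c33 c44 c12 c23 c34 c41 s12 s23 s34 s41"
      unfolding p4_def pij_def q41_def q42_def
      using key[of c12 s12 c11 c22 c23 s23 c33 c34 s34 c44 c41 s41] by auto
  qed
  thus ?thesis by auto
qed

end
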